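(* Let $\mathcal C\subseteq\mathbb F_2^n$ be a binary linear code with error correcting capability $t$, $\prec$ an admissible order, and $(N,G)$ the output of Algorithm R for $\mathcal C$ and $<_e$. Let $w\in[X]$ and let $\mathrm{Can}(w,G)$ be an irreducible word obtained from $w$ by a finite sequence of one-step reductions modulo $G$. If $\mathrm{weight}(\psi(\mathrm{Can}(w,G)))\le t$, then $\psi(w)\in B(\mathcal C,t)$ and $\psi(\mathrm{Can}(w,G))$ is the error vector of $\psi(w)$, i.e. the unique $e\in\mathbb F_2^n$ with $\mathrm{weight}(e)\le t$ and $\psi(w)-e\in\mathcal C$. If $\mathrm{weight}(\psi(\mathrm{Can}(w,G)))>t$, then $\psi(w)$ contains more than $t$ errors, i.e. $\psi(w)\notin B(\mathcal C,t)$.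
   Context: Binary setting: $[X]$ is the free commutative monoid on $X=\{x_1,\dots,x_n\}$; $\psi(\prod x_i^{\beta_i})=(\beta_i\bmod 2)_i\in\mathbb F_2^n$; $\mathcal C$ has dimension $k$ and parity check matrix $H$ ($n\times(n-k)$, $\mathcal C=\{c:cH=0\}$); syndrome $\xi(w)=\psi(w)H$. Weight is Hamming weight, $d$ the minimum distance, $t=\lfloor(d-1)/2\rfloor$, and $B(\mathcal C,t)=\{y\in\mathbb F_2^n:\exists c\in\mathcal C,\ d(c,y)\le t\}$. $\mathrm{Ind}(w)=\{i:x_i\mid w\}$; error-vector order: $u<_e w$ iff $|\mathrm{Ind}(u)|<|\mathrm{Ind}(w)|$, or equality and $u\prec w$. Algorithm R: list $L$ sorted increasingly by $<_e$, set $N$, set $G$ of binomials; initially $L=(1)$, $N=G=\emptyset$. While $L\ne\emptyset$: remove the $<_e$-smallest $w$; if $w$ is divisible by the leading word of a binomial in $G$, discard it; otherwise if some $w'\in N$ has $\xi(w')=\xi(w)$, add $w-w'$ to $G$ with leading word $w$; else add $w$ to $N$ and insert all $wx$ ($x\in X$) into $L$. Output $(N,G)$. One-step reduction modulo $G$: a non-standard word (some exponent $\ge 2$) reduces to its standard form (exponents mod 2); a standard word $w=us$ with $u-u'\in G$ of leading word $u$ reduces to $u's$. Irreducible means no reduction applies. *)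

theory Defs
  imports Main
begin

text \<open>A word is represented by its exponent vector; indices are 0..n-1.\<close>
type_synonym word = "nat \<Rightarrow> nat"

definition words :: "nat \<Rightarrow> word set" where
  "words n = {w. \<forall>i. n \<le> i \<longrightarrow> w i = 0}"

definition one_w :: word where
  "one_w = (\<lambda>_. 0)"

definition wmult :: "word \<Rightarrow> word \<Rightarrow> word" where
  "wmult u w = (\<lambda>i. u i + w i)"

definition var :: "nat \<Rightarrow> word" where
  "var i = (\<lambda>j. if j = i then 1 else 0)"

definition wdvd :: "word \<Rightarrow> word \<Rightarrow> bool" where
  "wdvd u w \<longleftrightarrow> (\<forall>i. u i \<le> w i)"

definition Ind :: "word \<Rightarrow> nat set" where
  "Ind w = {i. 1 \<le> w i}"

type_synonym vec = "nat \<Rightarrow> bool"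

definition vecs :: "nat \<Rightarrow> vec set" where
  "vecs n = {v. \<forall>i. n \<le> i \<longrightarrow> \<not> v i}"

definition zero_vec :: vec where
  "zero_vec = (\<lambda>_. False)"

definition vadd :: "vec \<Rightarrow> vec \<Rightarrow> vec" where
  "vadd u v = (\<lambda>i. u i \<noteq> v i)"

definition weight :: "nat \<Rightarrow> vec \<Rightarrow> nat" where
  "weight n v = card {i. i < n \<and> v i}"

definition hdist :: "nat \<Rightarrow> vec \<Rightarrow> vec \<Rightarrow> nat" where
  "hdist n u v = weight n (vadd u v)"

definition psi :: "word \<Rightarrow> vec" where
  "psi w = (\<lambda>i. odd (w i))"

text \<open>H i j is the entry in row i < n, column j < m; syndrome of v is v H.\<close>
definition syn :: "nat \<Rightarrow> nat \<Rightarrow> (nat \<Rightarrow> nat \<Rightarrow> bool) \<Rightarrow> vec \<Rightarrow> vec" where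
  "syn n m H v = (\<lambda>j. j < m \<and> odd (card {i. i < n \<and> v i \<and> H i j}))"

definition code :: "nat \<Rightarrow> nat \<Rightarrow> (nat \<Rightarrow> nat \<Rightarrow> bool) \<Rightarrow> vec set" where
  "code n m H = {c \<in> vecs n. syn n m H c = zero_vec}"

definition xi :: "nat \<Rightarrow> nat \<Rightarrow> (nat \<Rightarrow> nat \<Rightarrow> bool) \<Rightarrow> word \<Rightarrow> vec" where
  "xi n m H w = syn n m H (psi w)"

definition min_dist :: "nat \<Rightarrow> vec set \<Rightarrow> nat" where
  "min_dist n C = Min {weight n c | c. c \<in> C \<and> c \<noteq> zero_vec}"

definition tcap :: "nat \<Rightarrow> vec set \<Rightarrow> nat" where
  "tcap n C = (min_dist n C - 1) div 2"

definition ball_code :: "nat \<Rightarrow> vec set \<Rightarrow> nat \<Rightarrow> vec set" where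
  "ball_code n C t = {y \<in> vecs n. \<exists>c\<in>C. hdist n c y \<le> t}"

definition error_vector :: "nat \<Rightarrow> vec set \<Rightarrow> nat \<Rightarrow> vec \<Rightarrow> vec" where
  "error_vector n C t y = (THE e. e \<in> vecs n \<and> weight n e \<le> t \<and> vadd y e \<in> C)"

definition admissible :: "nat \<Rightarrow> (word \<Rightarrow> word \<Rightarrow> bool) \<Rightarrow> bool" where
  "admissible n prec \<longleftrightarrow>
     (\<forall>u\<in>words n. \<not> prec u u) \<and>
     (\<forall>u\<in>words n. \<forall>v\<in>words n. \<forall>w\<in>words n. prec u v \<longrightarrow> prec v w \<longrightarrow> prec u w) \<and>
     (\<forall>u\<in>words n. \<forall>v\<in>words n. u \<noteq> v \<longrightarrow> prec u v \<or> prec v u) \<and>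
     (\<forall>w\<in>words n. w \<noteq> one_w \<longrightarrow> prec one_w w) \<and>
     (\<forall>u\<in>words n. \<forall>w\<in>words n. \<forall>s\<in>words n. prec u w \<longrightarrow> prec (wmult u s) (wmult w s))"

definition err_less :: "(word \<Rightarrow> word \<Rightarrow> bool) \<Rightarrow> word \<Rightarrow> word \<Rightarrow> bool" where
  "err_less prec u w \<longleftrightarrow>
     card (Ind u) < card (Ind w) \<or> (card (Ind u) = card (Ind w) \<and> prec u w)"

text \<open>State (L, N, G): L is the (duplicate-free) list of pending words, kept as a set and
  processed in increasing err_less order; G is a set of binomials w - w' stored as pairs
  (leading word w, other word w').\<close>
type_synonym stateR = "word set \<times> word set \<times> (word \<times> word) set"

inductive algR_step :: "nat \<Rightarrow> nat \<Rightarrow> (nat \<Rightarrow> nat \<Rightarrow> bool) \<Rightarrow> (word \<Rightarrow> word \<Rightarrow> bool)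
    \<Rightarrow> stateR \<Rightarrow> stateR \<Rightarrow> bool"
  for n m H prec where
  discard: "\<lbrakk> w \<in> L; \<forall>u\<in>L. u \<noteq> w \<longrightarrow> err_less prec w u;
             \<exists>(a, b)\<in>G. wdvd a w \<rbrakk>
    \<Longrightarrow> algR_step n m H prec (L, N, G) (L - {w}, N, G)"
| addG: "\<lbrakk> w \<in> L; \<forall>u\<in>L. u \<noteq> w \<longrightarrow> err_less prec w u;
           \<not> (\<exists>(a, b)\<in>G. wdvd a w); w' \<in> N; xi n m H w' = xi n m H w \<rbrakk>
    \<Longrightarrow> algR_step n m H prec (L, N, G) (L - {w}, N, insert (w, w') G)"
| addN: "\<lbrakk> w \<in> L; \<forall>u\<in>L. u \<noteq> w \<longrightarrow> err_less prec w u;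
           \<not> (\<exists>(a, b)\<in>G. wdvd a w); \<not> (\<exists>w'\<in>N. xi n m H w' = xi n m H w) \<rbrakk>
    \<Longrightarrow> algR_step n m H prec (L, N, G)
          ((L - {w}) \<union> {wmult w (var i) | i. i < n}, insert w N, G)"

definition algR_output :: "nat \<Rightarrow> nat \<Rightarrow> (nat \<Rightarrow> nat \<Rightarrow> bool) \<Rightarrow> (word \<Rightarrow> word \<Rightarrow> bool)
    \<Rightarrow> word set \<Rightarrow> (word \<times> word) set \<Rightarrow> bool" where
  "algR_output n m H prec N G \<longleftrightarrow>
     (algR_step n m H prec)\<^sup>*\<^sup>* ({one_w}, {}, {}) ({}, N, G)"

inductive red1 :: "(word \<times> word) set \<Rightarrow> word \<Rightarrow> word \<Rightarrow> bool" for G where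
  nonstd: "\<exists>i. 2 \<le> w i \<Longrightarrow> red1 G w (\<lambda>i. w i mod 2)"
| binom: "\<lbrakk> \<forall>i. w i < 2; (u, u') \<in> G; w = wmult u s \<rbrakk> \<Longrightarrow> red1 G w (wmult u' s)"

definition irreducible_w :: "(word \<times> word) set \<Rightarrow> word \<Rightarrow> bool" where
  "irreducible_w G v \<longleftrightarrow> \<not> (\<exists>v'. red1 G v v')"

end

theory Submission
  imports Defs
begin


lemma wmult_comm: "wmult u s = wmult s u" by (auto simp: wmult_def)
lemma wmult_one: "wmult one_w u = u" by (auto simp: wmult_def one_w_def)
lemma words_wmult: "u \<in> words n \<Longrightarrow> s \<in> words n \<Longrightarrow> wmult u s \<in> words n"
  by (auto simp: words_def wmult_def)
lemma one_words: "one_w \<in> words n" by (auto simp: words_def one_w_def)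
lemma Ind_sub: "w \<in> words n \<Longrightarrow> Ind w \<subseteq> {..<n}"
  unfolding words_def Ind_def subset_iff by (metis (mono_tags) lessThan_iff mem_Collect_eq not_le not_one_le_zero)
lemma Ind_fin: "w \<in> words n \<Longrightarrow> finite (Ind w)"
  using Ind_sub finite_subset by blast

lemma adm_irrefl: "admissible n prec \<Longrightarrow> u \<in> words n \<Longrightarrow> \<not> prec u u"
  by (auto simp: admissible_def)
lemma adm_trans: "admissible n prec \<Longrightarrow> u \<in> words n \<Longrightarrow> v \<in> words n \<Longrightarrow> w \<in> words n
  \<Longrightarrow> prec u v \<Longrightarrow> prec v w \<Longrightarrow> prec u w"
  unfolding admissible_def by blast
lemma adm_mult: "admissible n prec \<Longrightarrow> u \<in> words n \<Longrightarrow> w \<in> words n \<Longrightarrow> s \<in> words n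
  \<Longrightarrow> prec u w \<Longrightarrow> prec (wmult u s) (wmult w s)"
  unfolding admissible_def by blast
lemma adm_one: "admissible n prec \<Longrightarrow> w \<in> words n \<Longrightarrow> w \<noteq> one_w \<Longrightarrow> prec one_w w"
  unfolding admissible_def by blast

lemma err_irrefl: "admissible n prec \<Longrightarrow> u \<in> words n \<Longrightarrow> \<not> err_less prec u u"
  by (auto simp: err_less_def adm_irrefl)

lemma err_trans: "admissible n prec \<Longrightarrow> u \<in> words n \<Longrightarrow> v \<in> words n \<Longrightarrow> w \<in> words n
  \<Longrightarrow> err_less prec u v \<Longrightarrow> err_less prec v w \<Longrightarrow> err_less prec u w"
  unfolding err_less_def using adm_trans[of n prec u v w] by auto

lemma err_asym: "admissible n prec \<Longrightarrow> u \<in> words n \<Longrightarrow> v \<in> words n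
  \<Longrightarrow> err_less prec u v \<Longrightarrow> \<not> err_less prec v u"
  using err_trans err_irrefl by blast

lemma dvd_err_less:
  assumes adm: "admissible n prec" and a: "a \<in> words n" and b: "b \<in> words n"
    and d: "wdvd a b" and ne: "a \<noteq> b"
  shows "err_less prec a b"
proof -
  have sub: "Ind a \<subseteq> Ind b" using d by (auto simp: Ind_def wdvd_def intro: order_trans)
  have le: "card (Ind a) \<le> card (Ind b)" using card_mono[OF Ind_fin[OF b] sub] .
  define s where "s = (\<lambda>i. b i - a i)"
  have bs: "b = wmult a s" using d by (auto simp: wmult_def s_def wdvd_def)
  have sw: "s \<in> words n" using b by (auto simp: words_def s_def)
  have s1: "s \<noteq> one_w" using bs ne by (auto simp: wmult_def one_w_def)
  have "prec one_w s" using adm_one[OF adm sw s1] .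
  hence "prec (wmult one_w a) (wmult s a)" using adm_mult[OF adm one_words sw a] by blast
  hence "prec a b" using bs by (simp add: wmult_one wmult_comm)
  thus ?thesis using le by (auto simp: err_less_def)
qed

lemma card_symdiff: "finite A \<Longrightarrow> finite B \<Longrightarrow>
  card A + card B = card ((A - B) \<union> (B - A)) + 2 * card (A \<inter> B)"
proof -
  assume f: "finite A" "finite B"
  have e1: "A = (A - B) \<union> (A \<inter> B)" by blast
  have "card A = card ((A - B) \<union> (A \<inter> B))" using e1 by simp
  also have "... = card (A - B) + card (A \<inter> B)" using f by (intro card_Un_disjoint) auto
  finally have 1: "card A = card (A - B) + card (A \<inter> B)" .
  have e2: "B = (B - A) \<union> (A \<inter> B)" by blast
  have "card B = card ((B - A) \<union> (A \<inter> B))" using e2 by simp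
  also have "... = card (B - A) + card (A \<inter> B)" using f by (intro card_Un_disjoint) auto
  finally have 2: "card B = card (B - A) + card (A \<inter> B)" .
  note 1 2
  moreover have "card ((A - B) \<union> (B - A)) = card (A - B) + card (B - A)"
    using f by (intro card_Un_disjoint) auto
  ultimately show ?thesis by simp
qed

lemma syn_vadd: "syn n m H (vadd a b) = vadd (syn n m H a) (syn n m H b)"
proof
  fix j
  let ?A = "{i. i < n \<and> a i \<and> H i j}" and ?B = "{i. i < n \<and> b i \<and> H i j}"
  have fA: "finite ?A" and fB: "finite ?B" by auto
  have eq: "{i. i < n \<and> vadd a b i \<and> H i j} = (?A - ?B) \<union> (?B - ?A)"
    by (auto simp: vadd_def)
  have "card ?A + card ?B = card ((?A - ?B) \<union> (?B - ?A)) + 2 * card (?A \<inter> ?B)"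
    using card_symdiff[OF fA fB] .
  hence "odd (card {i. i < n \<and> vadd a b i \<and> H i j}) = (odd (card ?A) \<noteq> odd (card ?B))"
    unfolding eq by presburger
  thus "syn n m H (vadd a b) j = vadd (syn n m H a) (syn n m H b) j"
    by (auto simp: syn_def vadd_def)
qed

lemma psi_wmult: "psi (wmult a b) = vadd (psi a) (psi b)"
  by (auto simp: psi_def wmult_def vadd_def)

lemma xi_wmult: "xi n m H (wmult a b) = vadd (xi n m H a) (xi n m H b)"
  by (simp add: xi_def psi_wmult syn_vadd)



definition Inv :: "nat \<Rightarrow> nat \<Rightarrow> (nat \<Rightarrow> nat \<Rightarrow> bool) \<Rightarrow> (word \<Rightarrow> word \<Rightarrow> bool)
   \<Rightarrow> word set \<Rightarrow> word set \<Rightarrow> (word \<times> word) set \<Rightarrow> bool" where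
 "Inv n m H prec L N G \<longleftrightarrow> L \<subseteq> words n \<and> N \<subseteq> words n
   \<and> (\<forall>x\<in>N. \<forall>y\<in>N. xi n m H x = xi n m H y \<longrightarrow> x = y)
   \<and> (\<forall>(u,u')\<in>G. u \<in> words n \<and> u' \<in> N \<and> xi n m H u' = xi n m H u \<and> err_less prec u' u)
   \<and> (\<forall>x\<in>N. \<forall>y\<in>L. err_less prec x y)
   \<and> (\<forall>w\<in>words n. w \<in> N \<or> (\<exists>(a,b)\<in>G. wdvd a w) \<or> (\<exists>d\<in>L. wdvd d w))
   \<and> (\<forall>x\<in>N. \<forall>i. x i < 2)"

lemma Inv_init: "Inv n m H prec {one_w} {} {}"
  by (auto simp: Inv_def words_def wdvd_def one_w_def)

lemma wdvd_trans: "wdvd a b \<Longrightarrow> wdvd b c \<Longrightarrow> wdvd a c"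
  by (auto simp: wdvd_def intro: order_trans)

lemma var_words: "i < n \<Longrightarrow> var i \<in> words n" by (auto simp: var_def words_def)

lemma InvD:
  assumes "Inv n m H prec L N G"
  shows "L \<subseteq> words n" "N \<subseteq> words n"
   "\<forall>x\<in>N. \<forall>y\<in>N. xi n m H x = xi n m H y \<longrightarrow> x = y"
   "\<forall>(u,u')\<in>G. u \<in> words n \<and> u' \<in> N \<and> xi n m H u' = xi n m H u \<and> err_less prec u' u"
   "\<forall>x\<in>N. \<forall>y\<in>L. err_less prec x y"
   "\<forall>w\<in>words n. w \<in> N \<or> (\<exists>(a,b)\<in>G. wdvd a w) \<or> (\<exists>d\<in>L. wdvd d w)"
   "\<forall>x\<in>N. \<forall>i. x i < 2"
  using assms by (simp_all add: Inv_def)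

lemma Inv_step:
  assumes adm: "admissible n prec"
    and st: "algR_step n m H prec (L, N, G) (L', N', G')"
    and I: "Inv n m H prec L N G"
  shows "Inv n m H prec L' N' G'"
  using st
proof cases
  case (discard w)
  note D = InvD[OF I]
  show ?thesis unfolding Inv_def
  proof (intro conjI)
    show "\<forall>w\<in>words n. w \<in> N' \<or> (\<exists>(a,b)\<in>G'. wdvd a w) \<or> (\<exists>d\<in>L'. wdvd d w)"
    proof
      fix v assume v: "v \<in> words n"
      from D(6) v have "v \<in> N \<or> (\<exists>(a,b)\<in>G. wdvd a v) \<or> (\<exists>d\<in>L. wdvd d v)"
        by blast
      moreover have "(\<exists>(a,b)\<in>G. wdvd a v)" if "wdvd w v"
      proof -
        obtain a b where ab: "(a,b) \<in> G" "wdvd a w" using discard by blast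
        show ?thesis using ab wdvd_trans[OF ab(2) that] by blast
      qed
      moreover have "L - {w} = L'" "N' = N" "G' = G" using discard by auto
      ultimately show "v \<in> N' \<or> (\<exists>(a,b)\<in>G'. wdvd a v) \<or> (\<exists>d\<in>L'. wdvd d v)"
        by blast
    qed
  next
    show "L' \<subseteq> words n" using D(1) discard by blast
  next
    show "N' \<subseteq> words n" using D(2) discard by blast
  next
    show "\<forall>x\<in>N'. \<forall>y\<in>N'. xi n m H x = xi n m H y \<longrightarrow> x = y" using D(3) discard by blast
  next
    show "\<forall>(u,u')\<in>G'. u \<in> words n \<and> u' \<in> N' \<and> xi n m H u' = xi n m H u \<and> err_less prec u' u"
      using D(4) discard by simp
  next
    show "\<forall>x\<in>N'. \<forall>y\<in>L'. err_less prec x y" using D(5) discard by simp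
  next
    show "\<forall>x\<in>N'. \<forall>i. x i < 2" using D(7) discard by simp
  qed
next
  case (addG w w')
  note D = InvD[OF I]
  have wL: "w \<in> words n" using D(1) addG by blast
  have el: "err_less prec w' w" using D(5) addG by blast
  show ?thesis unfolding Inv_def
  proof (intro conjI)
    show "\<forall>w\<in>words n. w \<in> N' \<or> (\<exists>(a,b)\<in>G'. wdvd a w) \<or> (\<exists>d\<in>L'. wdvd d w)"
    proof
      fix v assume v: "v \<in> words n"
      from D(6) v have "v \<in> N \<or> (\<exists>(a,b)\<in>G. wdvd a v) \<or> (\<exists>d\<in>L. wdvd d v)"
        by blast
      moreover have "(\<exists>(a,b)\<in>G'. wdvd a v)" if "wdvd w v"
        using addG that by blast
      moreover have "L - {w} = L'" "N' = N" "G \<subseteq> G'" using addG by auto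
      ultimately show "v \<in> N' \<or> (\<exists>(a,b)\<in>G'. wdvd a v) \<or> (\<exists>d\<in>L'. wdvd d v)"
        by blast
    qed
  next
    show "\<forall>(u,u')\<in>G'. u \<in> words n \<and> u' \<in> N' \<and> xi n m H u' = xi n m H u \<and> err_less prec u' u"
      using D(4) addG wL el by auto
  next
    show "L' \<subseteq> words n" using D(1) addG by blast
  next
    show "N' \<subseteq> words n" using D(2) addG by blast
  next
    show "\<forall>x\<in>N'. \<forall>y\<in>N'. xi n m H x = xi n m H y \<longrightarrow> x = y" using D(3) addG by blast
  next
    show "\<forall>x\<in>N'. \<forall>y\<in>L'. err_less prec x y" using D(5) addG by simp
  next
    show "\<forall>x\<in>N'. \<forall>i. x i < 2" using D(7) addG by simp
  qed
next
  case (addN w)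
  define L2 where "L2 = {wmult w (var i) | i. i < n}"
  have eqL: "L' = (L - {w}) \<union> L2" and eqN: "N' = insert w N" and eqG: "G' = G"
    using addN by (simp_all add: L2_def)
  have wLm: "w \<in> L" by (fact addN)
  have minw: "\<forall>u\<in>L. u \<noteq> w \<longrightarrow> err_less prec w u" by (fact addN)
  have noG: "\<not> (\<exists>(a, b)\<in>G. wdvd a w)" by (fact addN)
  have noN: "\<not> (\<exists>w'\<in>N. xi n m H w' = xi n m H w)" by (fact addN)
  note D = InvD[OF I]
  have LW: "L \<subseteq> words n" and NW: "N \<subseteq> words n" using D by auto
  have wW: "w \<in> words n" using wLm LW by blast
  have L2W: "L2 \<subseteq> words n" using wW by (auto simp: L2_def intro: words_wmult var_words)
  have wL2: "\<forall>y\<in>L2. err_less prec w y"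
  proof
    fix y assume "y \<in> L2"
    then obtain i where i: "i < n" "y = wmult w (var i)" by (auto simp: L2_def)
    have "wdvd w y" using i by (simp add: wdvd_def wmult_def)
    moreover have "y i = w i + 1" using i by (simp add: wmult_def var_def)
    hence "w \<noteq> y" by (metis n_not_Suc_n Suc_eq_plus1)
    ultimately have "wdvd w y" "w \<noteq> y" by blast+
    thus "err_less prec w y" using dvd_err_less[OF adm wW] L2W \<open>y \<in> L2\<close> by blast
  qed
  have wLL: "\<forall>y\<in>L - {w}. err_less prec w y" using minw by blast
  have Nw: "\<forall>x\<in>N. err_less prec x w" using D(5) wLm by blast
  have std: "\<forall>i. w i < 2"
  proof (rule ccontr)
    assume "\<not> (\<forall>i. w i < 2)"
    then obtain i where i: "2 \<le> w i" by (auto simp: not_less)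
    define d where "d = w(i := w i - 2)"
    have dW: "d \<in> words n" using wW i by (auto simp: words_def d_def)
    have dd1: "wdvd d w" by (simp add: d_def wdvd_def)
    have "d i = w i - 2" by (simp add: d_def)
    hence "d i \<noteq> w i" using i by simp
    hence "d \<noteq> w" by auto
    note dd = dd1 this
    have pd: "psi d = psi w"
    proof
      fix j show "psi d j = psi w j"
      proof (cases "j = i")
        case True
        have "odd (w i - 2) = odd (w i)" using i by presburger
        thus ?thesis using True by (simp add: psi_def d_def)
      next
        case False thus ?thesis by (simp add: psi_def d_def)
      qed
    qed
    from D(6) dW have "d \<in> N \<or> (\<exists>(a,b)\<in>G. wdvd a d) \<or> (\<exists>d2\<in>L. wdvd d2 d)"
      by blast
    moreover have "d \<notin> N" using noN pd by (auto simp: xi_def)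
    moreover have "\<not> (\<exists>(a,b)\<in>G. wdvd a d)"
    proof
      assume "\<exists>(a,b)\<in>G. wdvd a d"
      then obtain a b where ab: "(a,b) \<in> G" "wdvd a d" by blast
      hence "wdvd a w" using wdvd_trans dd(1) by blast
      thus False using noG ab by blast
    qed
    moreover have "\<not> (\<exists>d2\<in>L. wdvd d2 d)"
    proof
      assume "\<exists>d2\<in>L. wdvd d2 d"
      then obtain d2 where d2: "d2 \<in> L" "wdvd d2 d" by blast
      have d2w1: "wdvd d2 w" using d2 dd wdvd_trans by blast
      have d2w2: "d2 \<noteq> w"
      proof
        assume "d2 = w"
        hence "wdvd w d" using d2(2) by simp
        hence "\<And>j. d j = w j" using dd(1) unfolding wdvd_def by (meson le_antisym)
        hence "d = w" by (rule ext)
        thus False using dd(2) by blast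
      qed
      note d2w = d2w1 d2w2
      have "err_less prec d2 w" using dvd_err_less[OF adm _ wW d2w] d2 LW by blast
      moreover have "err_less prec w d2" using minw d2 d2w by blast
      ultimately show False using err_asym[OF adm] wW d2 LW by blast
    qed
    ultimately show False by blast
  qed
  show ?thesis unfolding Inv_def
  proof (intro conjI)
    show "\<forall>v\<in>words n. v \<in> N' \<or> (\<exists>(a,b)\<in>G'. wdvd a v) \<or> (\<exists>d\<in>L'. wdvd d v)"
    proof
      fix v assume v: "v \<in> words n"
      from D(6) v have "v \<in> N \<or> (\<exists>(a,b)\<in>G. wdvd a v) \<or> (\<exists>d\<in>L. wdvd d v)"
        by blast
      moreover have "v \<in> N' \<or> (\<exists>d\<in>L'. wdvd d v)" if "wdvd w v"
      proof (cases "v = w")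
        case True thus ?thesis using eqN by simp
      next
        case False
        have "\<exists>i. w i < v i"
        proof -
          from False obtain i where "v i \<noteq> w i" by (auto simp: fun_eq_iff)
          moreover have "w i \<le> v i" using that by (simp add: wdvd_def)
          ultimately show ?thesis by (intro exI[of _ i]) simp
        qed
        then obtain i where i: "w i < v i" by blast
        have "i < n"
        proof (rule ccontr)
          assume "\<not> i < n" hence "v i = 0" using v by (simp add: words_def)
          thus False using i by simp
        qed
        moreover have "wdvd (wmult w (var i)) v" using i that
          by (auto simp: wdvd_def wmult_def var_def)
        moreover have "wmult w (var i) \<in> L'" if "i < n" using eqL that L2_def by blast
        ultimately show ?thesis by blast
      qed
      moreover have "N \<subseteq> N'" "G' = G" "L - {w} \<subseteq> L'" using eqL eqN eqG by auto
      ultimately show "v \<in> N' \<or> (\<exists>(a,b)\<in>G'. wdvd a v) \<or> (\<exists>d\<in>L'. wdvd d v)"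
        by blast
    qed
  next
    show "\<forall>x\<in>N'. \<forall>y\<in>L'. err_less prec x y"
    proof (intro ballI)
      fix x y assume x: "x \<in> N'" and y: "y \<in> L'"
      have yW: "y \<in> words n" using y eqL LW L2W by blast
      show "err_less prec x y"
      proof (cases "x = w")
        case True
        from y eqL have "y \<in> L - {w} \<or> y \<in> L2" by blast
        thus ?thesis using True wL2 wLL by blast
      next
        case False
        hence xN: "x \<in> N" using x eqN by blast
        show ?thesis
        proof (cases "y \<in> L")
          case True thus ?thesis using D(5) xN by blast
        next
          case False
          hence "y \<in> L2" using y eqL by blast
          hence "err_less prec w y" using wL2 by blast
          thus ?thesis using Nw xN err_trans[OF adm, of x w y] NW wW yW by blast
        qed
      qed
    qed
  next
    show "L' \<subseteq> words n" using eqL LW L2W by blast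
  next
    show "N' \<subseteq> words n" using eqN NW wW by blast
  next
    have inj: "\<forall>x\<in>N. \<forall>y\<in>N. xi n m H x = xi n m H y \<longrightarrow> x = y" using D by simp
    show "\<forall>x\<in>N'. \<forall>y\<in>N'. xi n m H x = xi n m H y \<longrightarrow> x = y"
    proof (intro ballI impI)
      fix x y assume x: "x \<in> N'" and y: "y \<in> N'" and e: "xi n m H x = xi n m H y"
      show "x = y"
      proof (cases "x = w \<or> y = w")
        case True thus ?thesis using x y e noN inj eqN by (metis insert_iff)
      next
        case False thus ?thesis using x y e inj eqN by blast
      qed
    qed
  next
    have g: "\<forall>(u,u')\<in>G. u \<in> words n \<and> u' \<in> N \<and> xi n m H u' = xi n m H u \<and> err_less prec u' u"
      using D by simp
    show "\<forall>(u,u')\<in>G'. u \<in> words n \<and> u' \<in> N' \<and> xi n m H u' = xi n m H u \<and> err_less prec u' u"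
    proof (intro ballI)
      fix p assume "p \<in> G'"
      hence "p \<in> G" using eqG by simp
      thus "case p of (u,u') \<Rightarrow> u \<in> words n \<and> u' \<in> N' \<and> xi n m H u' = xi n m H u \<and> err_less prec u' u"
        using g eqN by (cases p) auto
    qed
  next
    have "\<forall>x\<in>N. \<forall>i. x i < 2" using D by simp
    thus "\<forall>x\<in>N'. \<forall>i. x i < 2" using std eqN by auto
  qed
qed

lemma Inv_reach:
  assumes adm: "admissible n prec"
    and "(algR_step n m H prec)\<^sup>*\<^sup>* ({one_w}, {}, {}) S"
  shows "case S of (L, N, G) \<Rightarrow> Inv n m H prec L N G"
  using assms(2)
proof induction
  case base thus ?case using Inv_init by simp
next
  case (step y z)
  thus ?case using Inv_step[OF adm] by (cases y; cases z) auto
qed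



lemma red1_pres:
  assumes I: "Inv n m H prec L N G" and r: "red1 G a b" and a: "a \<in> words n"
  shows "b \<in> words n \<and> xi n m H b = xi n m H a"
  using r
proof cases
  case nonstd
  have "psi b = psi a" using nonstd by (auto simp: psi_def)
  moreover have "b \<in> words n" using nonstd a by (auto simp: words_def)
  ultimately show ?thesis by (simp add: xi_def)
next
  case (binom u u' s)
  note D = InvD[OF I]
  have g: "u' \<in> N" "xi n m H u' = xi n m H u" using D(4) binom by auto
  have u'W: "u' \<in> words n" using g D(2) by blast
  have sW: "s \<in> words n" using a binom by (auto simp: words_def wmult_def)
  have "b \<in> words n" using binom words_wmult[OF u'W sW] by simp
  moreover have "xi n m H b = xi n m H a" using binom g by (simp add: xi_wmult)
  ultimately show ?thesis ..
qed

lemma reds_pres: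
  assumes I: "Inv n m H prec L N G" and r: "(red1 G)\<^sup>*\<^sup>* a b" and a: "a \<in> words n"
  shows "b \<in> words n \<and> xi n m H b = xi n m H a"
  using r
proof induction
  case base thus ?case using a by simp
next
  case (step y z)
  thus ?case using red1_pres[OF I, of y z] by simp
qed

lemma std_finite: "finite {e \<in> words n. \<forall>i. e i < (2::nat)}"
proof -
  let ?f = "\<lambda>A. (\<lambda>i. if i \<in> A then 1 else 0) :: word"
  have "{e \<in> words n. \<forall>i. e i < (2::nat)} \<subseteq> ?f ` Pow {..<n}"
  proof
    fix e assume e: "e \<in> {e \<in> words n. \<forall>i. e i < (2::nat)}"
    have "e = ?f (Ind e)"
    proof
      fix i
      have "e i < 2" using e by simp
      thus "e i = ?f (Ind e) i" by (cases "e i = 0") (auto simp: Ind_def)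
    qed
    moreover have "Ind e \<in> Pow {..<n}" using Ind_sub e by auto
    ultimately show "e \<in> ?f ` Pow {..<n}" by blast
  qed
  thus ?thesis using finite_subset by blast
qed

lemma descent:
  assumes adm: "admissible n prec" and I: "Inv n m H prec {} N G" and vN: "v \<in> N"
  shows "e \<in> words n \<Longrightarrow> \<forall>i. e i < 2 \<Longrightarrow> xi n m H e = xi n m H v
         \<Longrightarrow> card (Ind v) \<le> card (Ind e)"
proof -
  note D = InvD[OF I]
  define S where "S = {e \<in> words n. \<forall>i. e i < (2::nat)}"
  define R where "R = {(a,b). a \<in> S \<and> b \<in> S \<and> err_less prec a b}"
  have fS: "finite S" using std_finite S_def by simp
  have fR: "finite R"
  proof -
    have "R \<subseteq> S \<times> S" by (auto simp: R_def)
    thus ?thesis using fS finite_subset by blast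
  qed
  have tR: "trans R"
    unfolding trans_def R_def S_def using err_trans[OF adm] by blast
  have iR: "irrefl R"
    unfolding irrefl_def R_def S_def using err_irrefl[OF adm] by blast
  have "R\<^sup>+ = R" using tR by (simp add: trancl_id)
  hence "acyclic R" using iR by (simp add: acyclic_irrefl)
  hence wfR: "wf R" using fR finite_acyclic_wf by blast
  have main: "\<forall>e. e \<in> S \<longrightarrow> xi n m H e = xi n m H v \<longrightarrow> card (Ind v) \<le> card (Ind e)"
  proof
    fix e
    show "e \<in> S \<longrightarrow> xi n m H e = xi n m H v \<longrightarrow> card (Ind v) \<le> card (Ind e)"
    proof (induction e rule: wf_induct[OF wfR])
      case (1 e)
      show ?case
      proof (intro impI)
        assume eS: "e \<in> S" and ex: "xi n m H e = xi n m H v"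
        have eW: "e \<in> words n" and estd: "\<forall>i. e i < 2" using eS by (auto simp: S_def)
        show "card (Ind v) \<le> card (Ind e)"
        proof (cases "e \<in> N")
          case True
          hence "e = v" using D(3) vN ex by blast
          thus ?thesis by simp
        next
          case False
          from D(6) eW False obtain u u' where uu: "(u,u') \<in> G" "wdvd u e" by blast
          have uW: "u \<in> words n" and u'N: "u' \<in> N" and xu: "xi n m H u' = xi n m H u"
            and elu: "err_less prec u' u" using D(4) uu(1) by auto
          have u'W: "u' \<in> words n" using u'N D(2) by blast
          have u'std: "\<forall>i. u' i < 2" using u'N D(7) by blast
          define s where "s = (\<lambda>i. e i - u i)"
          have es: "e = wmult u s" using uu(2) by (auto simp: s_def wmult_def wdvd_def)
          have sW: "s \<in> words n" using eW by (auto simp: s_def words_def)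
          define e' where "e' = (\<lambda>i. (u' i + s i) mod 2)"
          have e'W: "e' \<in> words n" using u'W sW by (auto simp: e'_def words_def)
          have e'std: "\<forall>i. e' i < 2" by (simp add: e'_def)
          have e'S: "e' \<in> S" using e'W e'std by (simp add: S_def)
          have "psi e' = psi (wmult u' s)" by (auto simp: psi_def e'_def wmult_def)
          hence "xi n m H e' = xi n m H (wmult u' s)" by (simp add: xi_def)
          also have "... = xi n m H e" using es xu by (simp add: xi_wmult)
          finally have xe': "xi n m H e' = xi n m H v" using ex by simp
          have fu: "finite (Ind u)" "finite (Ind s)" "finite (Ind u')" "finite (Ind e)" "finite (Ind e')"
            using uW sW u'W eW e'W Ind_fin by blast+
          have IndE: "Ind e = Ind u \<union> Ind s" using es by (auto simp: Ind_def wmult_def)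
          have disj: "Ind u \<inter> Ind s = {}"
          proof -
            { fix i assume "i \<in> Ind u" "i \<in> Ind s"
              hence "2 \<le> e i" using es by (auto simp: Ind_def wmult_def)
              hence False using estd by (metis not_less) }
            thus ?thesis by blast
          qed
          have cE: "card (Ind e) = card (Ind u) + card (Ind s)"
            using IndE disj fu card_Un_disjoint by metis
          have sub': "Ind e' \<subseteq> Ind u' \<union> Ind s" by (auto simp: Ind_def e'_def)
          have cu: "card (Ind u') \<le> card (Ind u)" using elu by (auto simp: err_less_def)
          have el: "err_less prec e' e"
          proof (cases "Ind u' \<inter> Ind s = {}")
            case True
            have "\<forall>i. u' i + s i < 2"
            proof
              fix i
              have "s i < 2" using estd es by (simp add: wmult_def) (metis add_lessD1 add.commute)
              moreover have "i \<notin> Ind u' \<or> i \<notin> Ind s" using True by blast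
              hence "u' i = 0 \<or> s i = 0" by (auto simp: Ind_def)
              ultimately show "u' i + s i < 2" using u'std[rule_format, of i] by auto
            qed
            hence e'eq: "e' = wmult u' s" by (auto simp: e'_def wmult_def fun_eq_iff)
            have IndE': "Ind e' = Ind u' \<union> Ind s" using e'eq by (auto simp: Ind_def wmult_def)
            have cE': "card (Ind e') = card (Ind u') + card (Ind s)"
              using IndE' True fu card_Un_disjoint by metis
            show ?thesis
            proof (cases "card (Ind u') < card (Ind u)")
              case True thus ?thesis using cE cE' by (simp add: err_less_def)
            next
              case False
              hence eqc: "card (Ind u') = card (Ind u)" and "prec u' u" using elu cu
                by (auto simp: err_less_def)
              hence "prec (wmult u' s) (wmult u s)" using adm_mult[OF adm u'W uW sW] by blast
              thus ?thesis using e'eq es cE cE' eqc by (simp add: err_less_def)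
            qed
          next
            case False
            have "card (Ind e') \<le> card (Ind u' \<union> Ind s)" using sub' fu card_mono by (metis finite_UnI)
            moreover have "card (Ind u' \<union> Ind s) + card (Ind u' \<inter> Ind s) = card (Ind u') + card (Ind s)"
              using fu card_Un_Int by metis
            moreover have "card (Ind u' \<inter> Ind s) > 0" using False fu by auto
            ultimately have "card (Ind e') < card (Ind e)" using cE cu by linarith
            thus ?thesis by (simp add: err_less_def)
          qed
          hence "(e', e) \<in> R" using e'S eS by (simp add: R_def)
          hence "card (Ind v) \<le> card (Ind e')" using 1 e'S xe' by blast
          moreover have "card (Ind e') \<le> card (Ind e)" using el by (auto simp: err_less_def)
          ultimately show ?thesis by linarith
        qed
      qed
    qed
  qed
  assume "e \<in> words n" "\<forall>i. e i < 2" "xi n m H e = xi n m H v"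
  thus "card (Ind v) \<le> card (Ind e)" using main S_def by blast
qed


lemma vadd_self: "vadd a a = zero_vec" by (simp add: vadd_def zero_vec_def)
lemma vadd_zero: "vadd a zero_vec = a" by (simp add: vadd_def zero_vec_def)
lemma zero_vadd: "vadd zero_vec a = a" by (simp add: vadd_def zero_vec_def)
lemma vadd_comm: "vadd a b = vadd b a" by (auto simp: vadd_def)
lemma vadd_assoc: "vadd (vadd a b) c = vadd a (vadd b c)" by (auto simp: vadd_def)

lemma weight_le_n: "weight n x \<le> n"
proof -
  have "{i. i < n \<and> x i} \<subseteq> {..<n}" by auto
  hence "card {i. i < n \<and> x i} \<le> card {..<n}" by (intro card_mono) auto
  thus ?thesis by (simp add: weight_def)
qed

lemma weight_vadd: "weight n (vadd a b) \<le> weight n a + weight n b"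
proof -
  have "{i. i < n \<and> vadd a b i} \<subseteq> {i. i < n \<and> a i} \<union> {i. i < n \<and> b i}"
    by (auto simp: vadd_def)
  hence "card {i. i < n \<and> vadd a b i} \<le> card ({i. i < n \<and> a i} \<union> {i. i < n \<and> b i})"
    by (intro card_mono) auto
  also have "... \<le> card {i. i < n \<and> a i} + card {i. i < n \<and> b i}" by (rule card_Un_le)
  finally show ?thesis by (simp add: weight_def)
qed

lemma weight_pos: "c \<in> vecs n \<Longrightarrow> c \<noteq> zero_vec \<Longrightarrow> 1 \<le> weight n c"
proof -
  assume c: "c \<in> vecs n" "c \<noteq> zero_vec"
  then obtain i where i: "c i" by (auto simp: zero_vec_def fun_eq_iff)
  hence "i < n" using c by (auto simp: vecs_def)
  hence "i \<in> {i. i < n \<and> c i}" using i by simp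
  hence "{i. i < n \<and> c i} \<noteq> {}" by blast
  thus ?thesis by (simp add: weight_def Suc_le_eq card_gt_0_iff)
qed

lemma code_vadd: "a \<in> code n m H \<Longrightarrow> b \<in> code n m H \<Longrightarrow> vadd a b \<in> code n m H"
proof -
  assume a: "a \<in> code n m H" and b: "b \<in> code n m H"
  have "syn n m H (vadd a b) = vadd zero_vec zero_vec" using a b by (simp add: code_def syn_vadd)
  moreover have "vadd a b \<in> vecs n" using a b by (auto simp: code_def vecs_def vadd_def)
  ultimately show ?thesis by (simp add: code_def vadd_self)
qed

lemma min_dist_props:
  assumes nt: "\<exists>c\<in>code n m H. c \<noteq> zero_vec"
  shows "1 \<le> min_dist n (code n m H)"
    and "\<And>c. c \<in> code n m H \<Longrightarrow> c \<noteq> zero_vec \<Longrightarrow> min_dist n (code n m H) \<le> weight n c"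
proof -
  let ?W = "{weight n c | c. c \<in> code n m H \<and> c \<noteq> zero_vec}"
  have fW: "finite ?W"
  proof -
    have "?W \<subseteq> {..n}" using weight_le_n by auto
    thus ?thesis using finite_subset by blast
  qed
  have neW: "?W \<noteq> {}" using nt by blast
  have "Min ?W \<in> ?W" using fW neW by (rule Min_in)
  then obtain c0 where c0: "Min ?W = weight n c0" "c0 \<in> code n m H" "c0 \<noteq> zero_vec" by blast
  have "1 \<le> weight n c0" using c0 weight_pos by (auto simp: code_def)
  thus "1 \<le> min_dist n (code n m H)" using c0 by (simp add: min_dist_def)
  fix c assume "c \<in> code n m H" "c \<noteq> zero_vec"
  hence "weight n c \<in> ?W" by blast
  thus "min_dist n (code n m H) \<le> weight n c" unfolding min_dist_def using fW by (simp add: Min_le)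
qed

lemma unique_err:
  assumes nt: "\<exists>c\<in>code n m H. c \<noteq> zero_vec"
    and e1: "e1 \<in> vecs n" "weight n e1 \<le> tcap n (code n m H)"
    and e2: "e2 \<in> vecs n" "weight n e2 \<le> tcap n (code n m H)"
    and c: "vadd e1 e2 \<in> code n m H"
  shows "e1 = e2"
proof (rule ccontr)
  assume ne: "e1 \<noteq> e2"
  have "vadd e1 e2 \<noteq> zero_vec" using ne by (auto simp: vadd_def zero_vec_def fun_eq_iff)
  hence "min_dist n (code n m H) \<le> weight n (vadd e1 e2)" using min_dist_props(2)[OF nt c] by blast
  also have "... \<le> weight n e1 + weight n e2" by (rule weight_vadd)
  also have "... \<le> 2 * tcap n (code n m H)" using e1 e2 by simp
  also have "... \<le> min_dist n (code n m H) - 1" by (simp add: tcap_def)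
  finally show False using min_dist_props(1)[OF nt] by linarith
qed

lemma psi_vecs: "w \<in> words n \<Longrightarrow> psi w \<in> vecs n"
  by (auto simp: words_def vecs_def psi_def)

theorem theorem5p1:
  fixes n m :: nat and H :: "nat \<Rightarrow> nat \<Rightarrow> bool"
    and prec :: "word \<Rightarrow> word \<Rightarrow> bool"
    and N :: "word set" and G :: "(word \<times> word) set" and w v :: word
  assumes nontriv: "\<exists>c\<in>code n m H. c \<noteq> zero_vec"
    and adm: "admissible n prec"
    and out: "algR_output n m H prec N G"
    and w: "w \<in> words n"
    and reds: "(red1 G)\<^sup>*\<^sup>* w v"
    and irr: "irreducible_w G v"
  shows "(weight n (psi v) \<le> tcap n (code n m H) \<longrightarrow>
            psi w \<in> ball_code n (code n m H) (tcap n (code n m H)) \<and>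
            psi v = error_vector n (code n m H) (tcap n (code n m H)) (psi w))
       \<and> (tcap n (code n m H) < weight n (psi v) \<longrightarrow>
            psi w \<notin> ball_code n (code n m H) (tcap n (code n m H)))"
proof -
  let ?C = "code n m H" and ?t = "tcap n (code n m H)"
  have I: "Inv n m H prec {} N G"
    using Inv_reach[OF adm out[unfolded algR_output_def]] by simp
  note D = InvD[OF I]
  have vw: "v \<in> words n" and xv: "xi n m H v = xi n m H w"
    using reds_pres[OF I reds w] by auto
  have vstd: "\<forall>i. v i < 2"
  proof (rule ccontr)
    assume "\<not> (\<forall>i. v i < 2)"
    hence "\<exists>i. 2 \<le> v i" by (auto simp: not_less)
    hence "red1 G v (\<lambda>i. v i mod 2)" by (rule red1.nonstd)
    thus False using irr by (auto simp: irreducible_w_def)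
  qed
  have vN: "v \<in> N"
  proof -
    have "\<not> (\<exists>(a,b)\<in>G. wdvd a v)"
    proof
      assume "\<exists>(a,b)\<in>G. wdvd a v"
      then obtain a b where ab: "(a,b) \<in> G" "wdvd a v" by blast
      define s where "s = (\<lambda>i. v i - a i)"
      have "v = wmult a s" using ab(2) by (auto simp: s_def wmult_def wdvd_def)
      hence "red1 G v (wmult b s)" using red1.binom[OF vstd ab(1)] by blast
      thus False using irr by (auto simp: irreducible_w_def)
    qed
    thus ?thesis using D(6) vw by blast
  qed
  have pwV: "psi w \<in> vecs n" and pvV: "psi v \<in> vecs n" using psi_vecs w vw by auto
  show ?thesis
  proof (intro conjI impI)
    assume wt: "weight n (psi v) \<le> ?t"
    define c where "c = vadd (psi w) (psi v)"
    have cC: "c \<in> ?C"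
    proof -
      have "c \<in> vecs n" using pwV pvV by (auto simp: c_def vecs_def vadd_def)
      moreover have "syn n m H c = zero_vec"
        using xv by (simp add: c_def syn_vadd xi_def[symmetric] vadd_self)
      ultimately show ?thesis by (simp add: code_def)
    qed
    have "vadd c (psi w) = psi v" by (auto simp: c_def vadd_def)
    hence "hdist n c (psi w) \<le> ?t" using wt by (simp add: hdist_def)
    thus "psi w \<in> ball_code n ?C ?t" using cC pwV by (auto simp: ball_code_def)
    show "psi v = error_vector n ?C ?t (psi w)"
      unfolding error_vector_def
    proof (rule the1_equality[symmetric])
      show "psi v \<in> vecs n \<and> weight n (psi v) \<le> ?t \<and> vadd (psi w) (psi v) \<in> ?C"
        using pvV wt cC c_def by simp
      show "\<exists>!e. e \<in> vecs n \<and> weight n e \<le> ?t \<and> vadd (psi w) e \<in> ?C"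
      proof (rule ex1I)
        show "psi v \<in> vecs n \<and> weight n (psi v) \<le> ?t \<and> vadd (psi w) (psi v) \<in> ?C"
          using pvV wt cC c_def by simp
        fix e assume e: "e \<in> vecs n \<and> weight n e \<le> ?t \<and> vadd (psi w) e \<in> ?C"
        have "vadd (vadd (psi w) e) (vadd (psi w) (psi v)) \<in> ?C"
          using e cC c_def code_vadd by blast
        moreover have "vadd (vadd (psi w) e) (vadd (psi w) (psi v)) = vadd e (psi v)"
          by (auto simp: vadd_def)
        ultimately have "vadd e (psi v) \<in> ?C" by simp
        thus "e = psi v" using unique_err[OF nontriv] e pvV wt by blast
      qed
    qed
  next
    assume wt: "?t < weight n (psi v)"
    show "psi w \<notin> ball_code n ?C ?t"
    proof
      assume "psi w \<in> ball_code n ?C ?t"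
      then obtain c where cC: "c \<in> ?C" and hd: "hdist n c (psi w) \<le> ?t"
        by (auto simp: ball_code_def)
      define ev where "ev = vadd c (psi w)"
      have evV: "ev \<in> vecs n" using cC pwV by (auto simp: ev_def code_def vecs_def vadd_def)
      define e :: word where "e = (\<lambda>i. if ev i then 1 else 0)"
      have eW: "e \<in> words n" using evV by (auto simp: e_def words_def vecs_def)
      have estd: "\<forall>i. e i < 2" by (simp add: e_def)
      have pe: "psi e = ev" by (auto simp: e_def psi_def fun_eq_iff)
      have "syn n m H c = zero_vec" using cC by (simp add: code_def)
      hence "xi n m H e = xi n m H w"
        by (simp add: xi_def pe ev_def syn_vadd zero_vadd)
      hence xe: "xi n m H e = xi n m H v" using xv by simp
      have "Ind e = {i. i < n \<and> ev i}" using evV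
        by (auto simp: Ind_def e_def vecs_def) (metis not_le)
      hence cI: "card (Ind e) \<le> ?t" using hd by (simp add: hdist_def weight_def ev_def)
      have "card (Ind v) \<le> card (Ind e)" using descent[OF adm I vN eW estd xe] .
      moreover have "weight n (psi v) \<le> card (Ind v)"
      proof -
        have "{i. i < n \<and> psi v i} \<subseteq> Ind v"
          by (auto simp: psi_def Ind_def) (metis odd_pos Suc_le_eq One_nat_def)
        thus ?thesis unfolding weight_def using Ind_fin[OF vw] by (rule card_mono[rotated])
      qed
      ultimately show False using wt cI by linarith
    qed
  qed
qed


end
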